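(* A rational $\mathfrak{sl}(2)$-module is indecomposable as an $\mathfrak{sl}(2)$-module if and only if it is $\mathcal R$-indecomposable. Moreover, every indecomposable rational module is a generalized Casimir module. Hence the classes of indecomposable objects in $\mathcal R$, of $\mathcal R$-indecomposable objects of $\mathcal R$, of $\mathcal{RC}^\bullet$-indecomposable objects of $\mathcal{RC}^\bullet$ and of indecomposable objects of $\mathcal{RC}^\bullet$ all coincide.
   Context: $\mathfrak{sl}(2)$ has basis $L_{-1}=f$, $L_0=-\tfrac12 h$, $L_1=-e$ for a Chevalley basis $e,f,h$. An $\mathfrak{sl}(2)$-module $(V,\rho)$ is a $\mathbb{C}[z]$-module via $z\cdot v=\rho(L_0)v$; it is rational if it is, with this structure, a finite-dimensional $\mathbb{C}(z)$-vector space. $\mathcal R$ is the full subcategory of rational modules. Casimir operator: $C_\rho=\rho(L_0)(\rho(L_0)-1)-\rho(L_{-1})\rho(L_1)$; a module is generalized Casimir (of level $\mu$) if $(C_\rho-\mu)^n=0$ for some $\mu\in\mathbb{C}$, $n\ge1$; $\mathcal{RC}^\bullet$ is the full subcategory of rational generalized Casimir modules. A rational module $W$ is indecomposable if it is nonzero and not a direct sum of two nonzero $\mathfrak{sl}(2)$-submodules, and $\mathcal R$-indecomposable (resp. $\mathcal{RC}^\bullet$-indecomposable) if it is nonzero and not a direct sum of two nonzero rational (resp. rational generalized Casimir) submodules. *)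

theory Defs
  imports "HOL-Computational_Algebra.Polynomial"
begin

definition sl2_module ::
  "(complex \<Rightarrow> 'v::ab_group_add \<Rightarrow> 'v) \<Rightarrow> ('v \<Rightarrow> 'v) \<Rightarrow> ('v \<Rightarrow> 'v) \<Rightarrow> ('v \<Rightarrow> 'v) \<Rightarrow> bool" where
  "sl2_module sc e f h \<longleftrightarrow>
     vector_space sc \<and>
     Vector_Spaces.linear sc sc e \<and> Vector_Spaces.linear sc sc f \<and> Vector_Spaces.linear sc sc h \<and>
     (\<forall>v. h (e v) - e (h v) = sc 2 (e v)) \<and>
     (\<forall>v. h (f v) - f (h v) = sc (-2) (f v)) \<and>
     (\<forall>v. e (f v) - f (e v) = h v)"

definition Lm1 :: "('v \<Rightarrow> 'v) \<Rightarrow> 'v \<Rightarrow> 'v" where "Lm1 f = f"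
definition L0 :: "(complex \<Rightarrow> 'v \<Rightarrow> 'v) \<Rightarrow> ('v \<Rightarrow> 'v) \<Rightarrow> 'v \<Rightarrow> 'v" where
  "L0 sc h = (\<lambda>v. sc (-1/2) (h v))"
definition L1 :: "('v::ab_group_add \<Rightarrow> 'v) \<Rightarrow> 'v \<Rightarrow> 'v" where "L1 e = (\<lambda>v. - e v)"

definition poly_act ::
  "(complex \<Rightarrow> 'v::ab_group_add \<Rightarrow> 'v) \<Rightarrow> ('v \<Rightarrow> 'v) \<Rightarrow> complex poly \<Rightarrow> 'v \<Rightarrow> 'v" where
  "poly_act sc T p v = (\<Sum>i\<le>degree p. sc (coeff p i) ((T ^^ i) v))"

definition casimir ::
  "(complex \<Rightarrow> 'v::ab_group_add \<Rightarrow> 'v) \<Rightarrow> ('v \<Rightarrow> 'v) \<Rightarrow> ('v \<Rightarrow> 'v) \<Rightarrow> ('v \<Rightarrow> 'v) \<Rightarrow> 'v \<Rightarrow> 'v" where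
  "casimir sc e f h = (\<lambda>v. L0 sc h (L0 sc h v - v) - Lm1 f (L1 e v))"

definition sl2_submodule ::
  "(complex \<Rightarrow> 'v::ab_group_add \<Rightarrow> 'v) \<Rightarrow> ('v \<Rightarrow> 'v) \<Rightarrow> ('v \<Rightarrow> 'v) \<Rightarrow> ('v \<Rightarrow> 'v) \<Rightarrow> 'v set \<Rightarrow> bool" where
  "sl2_submodule sc e f h U \<longleftrightarrow>
     module.subspace sc U \<and> e ` U \<subseteq> U \<and> f ` U \<subseteq> U \<and> h ` U \<subseteq> U"

text \<open>Rationality of a submodule U: U is a C[z]-module via z.u = L_0 u. It is a C(z)-vector
  space (i.e. the C[z]-action extends to C(z)) iff every nonzero polynomial acts bijectively
  on U; it is finite-dimensional over C(z) iff there is a finite S \<subseteq> U such that every u \<in> U is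
  a C(z)-linear combination of S, i.e. (clearing a common denominator q \<noteq> 0)
  q(L_0) u = \<Sum>s\<in>S. p_s(L_0) s.\<close>

definition rational ::
  "(complex \<Rightarrow> 'v::ab_group_add \<Rightarrow> 'v) \<Rightarrow> ('v \<Rightarrow> 'v) \<Rightarrow> ('v \<Rightarrow> 'v) \<Rightarrow> ('v \<Rightarrow> 'v) \<Rightarrow> 'v set \<Rightarrow> bool" where
  "rational sc e f h U \<longleftrightarrow>
     sl2_submodule sc e f h U \<and>
     (\<forall>p. p \<noteq> 0 \<longrightarrow> bij_betw (poly_act sc (L0 sc h) p) U U) \<and>
     (\<exists>S. finite S \<and> S \<subseteq> U \<and>
        (\<forall>u\<in>U. \<exists>q c. q \<noteq> 0 \<and>
            poly_act sc (L0 sc h) q u = (\<Sum>s\<in>S. poly_act sc (L0 sc h) (c s) s)))"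

definition gen_casimir ::
  "(complex \<Rightarrow> 'v::ab_group_add \<Rightarrow> 'v) \<Rightarrow> ('v \<Rightarrow> 'v) \<Rightarrow> ('v \<Rightarrow> 'v) \<Rightarrow> ('v \<Rightarrow> 'v) \<Rightarrow> 'v set \<Rightarrow> bool" where
  "gen_casimir sc e f h U \<longleftrightarrow>
     sl2_submodule sc e f h U \<and>
     (\<exists>\<mu> n. n \<ge> 1 \<and> (\<forall>u\<in>U. ((\<lambda>v. casimir sc e f h v - sc \<mu> v) ^^ n) u = 0))"

definition direct_sum :: "'v::ab_group_add set \<Rightarrow> 'v set \<Rightarrow> 'v set \<Rightarrow> bool" where
  "direct_sum U A B \<longleftrightarrow> U = {a + b | a b. a \<in> A \<and> b \<in> B} \<and> A \<inter> B = {0}"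

definition indecomp_wrt ::
  "('v set \<Rightarrow> bool) \<Rightarrow> 'v::ab_group_add set \<Rightarrow> bool" where
  "indecomp_wrt P U \<longleftrightarrow>
     U \<noteq> {0} \<and> \<not> (\<exists>A B. P A \<and> P B \<and> A \<noteq> {0} \<and> B \<noteq> {0} \<and> direct_sum U A B)"

definition indecomposable where
  "indecomposable sc e f h U \<longleftrightarrow> indecomp_wrt (sl2_submodule sc e f h) U"

definition R_indecomposable where
  "R_indecomposable sc e f h U \<longleftrightarrow> indecomp_wrt (rational sc e f h) U"

definition RC_indecomposable where
  "RC_indecomposable sc e f h U \<longleftrightarrow>
     indecomp_wrt (\<lambda>A. rational sc e f h A \<and> gen_casimir sc e f h A) U"

end

theory Submission
  imports Defs "HOL-Computational_Algebra.Computational_Algebra"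
begin


lemma idom_dep:
  fixes v :: "'i \<Rightarrow> 'j \<Rightarrow> 'a::idom"
  assumes "finite J" "finite I" "card J < card I"
  shows "\<exists>\<beta>. (\<exists>i\<in>I. \<beta> i \<noteq> 0) \<and> (\<forall>j\<in>J. (\<Sum>i\<in>I. \<beta> i * v i j) = 0)"
  using assms
proof (induction J arbitrary: I v rule: finite_induct)
  case empty
  then have "I \<noteq> {}" by auto
  then show ?case by (rule_tac x="\<lambda>_. 1" in exI) auto
next
  case (insert j J I v)
  show ?case
  proof (cases "\<forall>i\<in>I. v i j = 0")
    case True
    have "card J < card I" using insert by auto
    from insert.IH[OF insert.prems(1) this, of v] obtain \<beta> where
      b: "(\<exists>i\<in>I. \<beta> i \<noteq> 0)" "(\<forall>j\<in>J. (\<Sum>i\<in>I. \<beta> i * v i j) = 0)" by blast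
    show ?thesis using b True by (rule_tac x=\<beta> in exI) auto
  next
    case False
    then obtain k where k: "k \<in> I" "v k j \<noteq> 0" by auto
    define I' where "I' = I - {k}"
    define v' where "v' i l = v k j * v i l - v i j * v k l" for i l
    have fI': "finite I'" using insert I'_def by auto
    have "card I' = card I - 1" using k insert I'_def by auto
    moreover have "card (insert j J) = card J + 1" using insert by auto
    ultimately have "card J < card I'" using insert by auto
    from insert.IH[OF fI' this, of v'] obtain \<beta>' where
      b: "(\<exists>i\<in>I'. \<beta>' i \<noteq> 0)" "(\<forall>l\<in>J. (\<Sum>i\<in>I'. \<beta>' i * v' i l) = 0)" by blast
    define \<beta> where "\<beta> i = (if i = k then - (\<Sum>i\<in>I'. \<beta>' i * v i j) else \<beta>' i * v k j)" for i
    have col: "(\<Sum>i\<in>I. \<beta> i * v i l) = (\<Sum>i\<in>I'. \<beta>' i * v' i l)" for l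
    proof -
      have "(\<Sum>i\<in>I. \<beta> i * v i l) = \<beta> k * v k l + (\<Sum>i\<in>I'. \<beta> i * v i l)"
        unfolding I'_def using k insert.prems by (simp add: sum.remove)
      also have "(\<Sum>i\<in>I'. \<beta> i * v i l) = (\<Sum>i\<in>I'. \<beta>' i * v k j * v i l)"
        by (rule sum.cong) (auto simp: \<beta>_def I'_def)
      also have "\<beta> k * v k l = - (\<Sum>i\<in>I'. \<beta>' i * v i j * v k l)"
        by (simp add: \<beta>_def sum_distrib_right)
      finally show ?thesis
        by (simp add: v'_def algebra_simps sum_subtractf[symmetric] sum_negf[symmetric] sum.distrib[symmetric])
    qed
    show ?thesis
    proof (rule exI[of _ \<beta>], intro conjI)
      from b(1) obtain i where "i \<in> I'" "\<beta>' i \<noteq> 0" by auto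
      then show "\<exists>i\<in>I. \<beta> i \<noteq> 0" using k by (rule_tac bexI[of _ i]) (auto simp: \<beta>_def I'_def)
      show "\<forall>l\<in>insert j J. (\<Sum>i\<in>I. \<beta> i * v i l) = 0"
        using b(2) by (auto simp: col v'_def)
    qed
  qed
qed

locale gctx = module s for s :: "'a::comm_ring_1 \<Rightarrow> 'v::ab_group_add \<Rightarrow> 'v" +
  fixes T :: "'v \<Rightarrow> 'v"
  assumes T_add: "T (x + y) = T x + T y" and T_s: "T (s a x) = s a (T x)"
begin

definition gact :: "'a poly \<Rightarrow> 'v \<Rightarrow> 'v" where
  "gact p v = (\<Sum>i\<le>degree p. s (coeff p i) ((T ^^ i) v))"

lemma T_zero[simp]: "T 0 = 0"
  using T_add[of 0 0] by simp

lemma T_sum: "T (sum g A) = (\<Sum>x\<in>A. T (g x))"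
proof -
  interpret additive T by standard (rule T_add)
  show ?thesis by (rule sum)
qed

lemma T_minus: "T (- x) = - T x" and T_diff: "T (x - y) = T x - T y"
proof -
  interpret additive T by standard (rule T_add)
  show "T (- x) = - T x" by (rule minus)
  show "T (x - y) = T x - T y" by (rule diff)
qed

lemma gact_N: "degree p < N \<Longrightarrow> gact p v = (\<Sum>i<N. s (coeff p i) ((T ^^ i) v))"
  unfolding gact_def
  by (rule sum.mono_neutral_left) (auto simp: coeff_eq_0)

lemma gact_0[simp]: "gact 0 v = 0"
  by (simp add: gact_def)

lemma gact_pCons: "gact (pCons a p) v = s a v + T (gact p v)"
proof -
  have d: "degree (pCons a p) < Suc (Suc (degree p))"
    using degree_pCons_le[of a p] by auto
  have "gact (pCons a p) v = (\<Sum>i<Suc (Suc (degree p)). s (coeff (pCons a p) i) ((T ^^ i) v))"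
    by (rule gact_N[OF d])
  also have "\<dots> = s a v + (\<Sum>i<Suc (degree p). s (coeff p i) (T ((T ^^ i) v)))"
    by (subst sum.lessThan_Suc_shift) (simp add: funpow_swap1)
  also have "(\<Sum>i<Suc (degree p). s (coeff p i) (T ((T ^^ i) v))) = T (gact p v)"
    by (simp only: gact_N[of p "Suc (degree p)"] T_sum T_s lessI)
  finally show ?thesis .
qed

lemma gact_add_v: "gact p (x + y) = gact p x + gact p y"
  by (induction p) (simp_all add: gact_pCons T_add scale_right_distrib algebra_simps)

lemma gact_s_v: "gact p (s a x) = s a (gact p x)"
  by (induction p) (simp_all add: gact_pCons T_s scale_right_distrib scale_left_commute mult.commute)

lemma gact_zero_v[simp]: "gact p 0 = 0"
  using gact_add_v[of p 0 0] by simp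

lemma gact_sum_v: "gact p (sum g A) = (\<Sum>x\<in>A. gact p (g x))"
proof -
  interpret additive "gact p" by standard (rule gact_add_v)
  show ?thesis by (rule sum)
qed

lemma gact_minus_v: "gact p (- x) = - gact p x" and gact_diff_v: "gact p (x - y) = gact p x - gact p y"
proof -
  interpret additive "gact p" by standard (rule gact_add_v)
  show "gact p (- x) = - gact p x" by (rule minus)
  show "gact p (x - y) = gact p x - gact p y" by (rule diff)
qed

lemma gact_add: "gact (p + q) v = gact p v + gact q v"
proof -
  define N where "N = Suc (max (degree p) (degree q))"
  have "degree (p + q) < N" "degree p < N" "degree q < N"
    using degree_add_le_max[of p q] by (auto simp: N_def)
  then show ?thesis
    by (simp add: gact_N scale_left_distrib sum.distrib)
qed

lemma gact_smult: "gact (smult a p) v = s a (gact p v)"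
proof -
  have "degree (smult a p) < Suc (degree p)" "degree p < Suc (degree p)"
    using degree_smult_le[of a p] by auto
  then show ?thesis
    by (simp only: gact_N coeff_smult scale_sum_right scale_scale)
qed

lemma gact_minus: "gact (- p) v = - gact p v"
  using gact_smult[where a="-1" and p=p and v=v] by simp

lemma gact_diff: "gact (p - q) v = gact p v - gact q v"
  using gact_add[of p "- q" v] gact_minus[of q v] by simp

lemma gact_const[simp]: "gact [:c:] v = s c v"
  by (simp add: gact_pCons)

lemma gact_one[simp]: "gact 1 v = v"
  by (simp add: one_pCons gact_pCons)

lemma gact_X: "gact [:a, b:] v = s a v + s b (T v)"
  by (simp add: gact_pCons T_s)

lemma gact_mult: "gact (p * q) v = gact p (gact q v)"
  by (induction p) (simp_all add: gact_pCons gact_add gact_smult)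

lemma gact_sum: "gact (sum g A) v = (\<Sum>x\<in>A. gact (g x) v)"
  by (induction A rule: infinite_finite_induct) (simp_all add: gact_add)

lemma gact_comm_T: "gact p (T v) = T (gact p v)"
  by (induction p) (simp_all add: gact_pCons T_add T_s)

lemma gact_comm:
  assumes "\<And>x y. S (x + y) = S x + S y" "\<And>a x. S (s a x) = s a (S x)" "\<And>x. S (T x) = T (S x)"
  shows "S (gact p v) = gact p (S v)"
proof -
  have "S 0 = 0" using assms(1)[of 0 0] by simp
  then show ?thesis by (induction p) (simp_all add: gact_pCons assms)
qed

lemma gact_monom: "gact (monom a n) v = s a ((T ^^ n) v)"
proof -
  have "degree (monom a n) < Suc n" using degree_monom_le[of a n] by simp
  then have "gact (monom a n) v = (\<Sum>i<Suc n. s (coeff (monom a n) i) ((T ^^ i) v))"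
    by (rule gact_N)
  also have "\<dots> = (\<Sum>i<Suc n. if i = n then s a ((T ^^ i) v) else 0)"
    by (rule sum.cong) auto
  also have "\<dots> = s a ((T ^^ n) v)" by (simp add: sum.delta')
  finally show ?thesis .
qed

lemma gact_power_lin: "gact ([:-c, 1:] ^ m) v = ((\<lambda>v. T v - s c v) ^^ m) v"
proof (induction m)
  case (Suc m)
  show ?case by (simp only: power_Suc gact_mult funpow.simps o_apply Suc gact_X) (simp add: scale_minus_left)
qed simp

end



locale sl2ctx =
  fixes sc :: "complex \<Rightarrow> 'v::ab_group_add \<Rightarrow> 'v" and e f h :: "'v \<Rightarrow> 'v"
  assumes sl2: "sl2_module sc e f h"
begin

lemma mod_sc: "module sc"
  using sl2 by (simp add: sl2_module_def module_iff_vector_space)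

sublocale vs: module sc by (rule mod_sc)

lemma lin_e: "e (x + y) = e x + e y" "e (sc c x) = sc c (e x)"
  and lin_f: "f (x + y) = f x + f y" "f (sc c x) = sc c (f x)"
  and lin_h: "h (x + y) = h x + h y" "h (sc c x) = sc c (h x)"
  using sl2 unfolding sl2_module_def linear_iff_module_hom module_hom_iff by auto

lemma rel_he: "h (e v) - e (h v) = sc 2 (e v)"
  and rel_hf: "h (f v) - f (h v) = sc (-2) (f v)"
  and rel_ef: "e (f v) - f (e v) = h v"
  using sl2 unfolding sl2_module_def by auto

definition T0 where "T0 = L0 sc h"

lemma T0_def': "T0 v = sc (-1/2) (h v)"
  by (simp add: T0_def L0_def)

lemma lin_T0: "T0 (x + y) = T0 x + T0 y" "T0 (sc c x) = sc c (T0 x)"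
  by (simp_all add: T0_def' lin_h vs.scale_right_distrib vs.scale_left_commute)

lemma add_hom_lemmas:
  fixes F :: "'v \<Rightarrow> 'v"
  assumes "\<And>x y. F (x + y) = F x + F y"
  shows "F 0 = 0" "F (- x) = - F x" "F (x - y) = F x - F y"
proof -
  interpret additive F by standard (rule assms)
  show "F 0 = 0" "F (- x) = - F x" "F (x - y) = F x - F y" by (rule zero, rule minus, rule diff)
qed

lemmas e_z = add_hom_lemmas[of e, OF lin_e(1)]
lemmas f_z = add_hom_lemmas[of f, OF lin_f(1)]
lemmas h_z = add_hom_lemmas[of h, OF lin_h(1)]
lemmas T0_z = add_hom_lemmas[of T0, OF lin_T0(1)]

lemma sc2: "sc 2 x = x + x"
proof -
  have "sc 2 x = sc (1 + 1) x" by simp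
  also have "\<dots> = x + x" by (simp only: vs.scale_left_distrib vs.scale_one)
  finally show ?thesis .
qed

lemma h_T0: "h v = - T0 v - T0 v"
proof -
  have "h v = sc (-2) (T0 v)" by (simp add: T0_def')
  also have "\<dots> = - T0 v - T0 v" by (simp add: sc2)
  finally show ?thesis .
qed

lemma eT: "e (T0 w) = T0 (e w) + e w"
proof -
  have "e (h w) = h (e w) - sc 2 (e w)" using rel_he[of w] by (simp add: algebra_simps)
  then show ?thesis by (simp add: T0_def' lin_e e_z vs.scale_right_diff_distrib)
qed

lemma fT: "f (T0 w) = T0 (f w) - f w"
proof -
  have "f (h w) = h (f w) - sc (-2) (f w)" using rel_hf[of w] by (simp add: algebra_simps)
  then show ?thesis by (simp add: T0_def' lin_f f_z vs.scale_right_diff_distrib vs.scale_right_distrib)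
qed

lemma ef: "e (f w) = f (e w) - T0 w - T0 w"
  using rel_ef[of w] h_T0[of w] by (simp add: algebra_simps)

definition CC where "CC = casimir sc e f h"

lemma CC_def': "CC v = T0 (T0 v) - T0 v + f (e v)"
  by (simp add: CC_def casimir_def T0_def[symmetric] Lm1_def L1_def f_z T0_z)

lemma lin_CC: "CC (x + y) = CC x + CC y" "CC (sc c x) = sc c (CC x)"
  by (simp_all add: CC_def' lin_e lin_f lin_T0 algebra_simps vs.scale_right_diff_distrib vs.scale_right_distrib)

lemmas CC_z = add_hom_lemmas[of CC, OF lin_CC(1)]

lemma e_CC: "e (CC v) = CC (e v)"
  by (simp add: CC_def' e_z lin_e eT ef algebra_simps f_z lin_f fT T0_z lin_T0)

lemma f_CC: "f (CC v) = CC (f v)"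
  by (simp add: CC_def' e_z lin_e eT ef algebra_simps f_z lin_f fT T0_z lin_T0)

lemma T0_CC: "T0 (CC v) = CC (T0 v)"
  by (simp add: CC_def' e_z lin_e eT ef algebra_simps f_z lin_f fT T0_z lin_T0)

end


context sl2ctx
begin

sublocale P: gctx sc T0
  by (intro gctx.intro gctx_axioms.intro mod_sc lin_T0)

lemma PA: "poly_act sc T0 = P.gact"
  by (intro ext) (simp add: poly_act_def P.gact_def)

sublocale Cs: gctx sc CC
  by (intro gctx.intro gctx_axioms.intro mod_sc lin_CC)

lemma PCA: "poly_act sc CC = Cs.gact"
  by (intro ext) (simp add: poly_act_def Cs.gact_def)

lemma mod_P: "module P.gact"
  by (unfold_locales) (simp_all add: P.gact_add_v P.gact_add P.gact_mult)

lemma CC_P: "CC (P.gact a x) = P.gact a (CC x)"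
  by (rule P.gact_comm) (simp_all add: lin_CC T0_CC)

sublocale A2: gctx P.gact CC
  by (intro gctx.intro gctx_axioms.intro mod_P lin_CC CC_P)

declare A2.scale_scale[simp del]

lemma P_e_sigma: "e (P.gact p w) = P.gact (pcompose p [:1,1:]) (e w)"
proof (induction p arbitrary: w)
  case 0
  then show ?case by (simp add: e_z)
next
  case (pCons a p)
  show ?case
    by (simp add: pcompose_pCons P.gact_pCons P.gact_add P.gact_mult P.gact_X lin_e eT pCons.IH
        algebra_simps)
qed

lemma P_e_tau: "P.gact p (e w) = e (P.gact (pcompose p [:-1,1:]) w)"
proof (induction p arbitrary: w)
  case 0
  then show ?case by (simp add: e_z)
next
  case (pCons a p)
  have T: "T0 (e x) = e (T0 x - x)" for x by (simp add: eT e_z)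
  define p' where "p' = pcompose p [:-1,1:]"
  have "P.gact (pCons a p) (e w) = sc a (e w) + T0 (e (P.gact p' w))"
    by (simp add: P.gact_pCons pCons.IH p'_def)
  also have "\<dots> = e (sc a w + (sc (-1) (P.gact p' w) + sc 1 (T0 (P.gact p' w))))"
    by (simp add: T lin_e e_z)
  also have "\<dots> = e (P.gact (pcompose (pCons a p) [:-1,1:]) w)"
    by (simp only: pcompose_pCons P.gact_add P.gact_mult P.gact_const P.gact_X p'_def)
  finally show ?case .
qed

lemma e_f_pow:
  assumes "e v = 0"
  shows "\<exists>a. e ((f^^Suc j) v) = P.gact [:a, -2 * of_nat (Suc j):] ((f^^j) v)"
proof (induction j)
  case 0
  show ?case
    by (rule exI[of _ 0]) (simp add: P.gact_X ef assms f_z sc2)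
next
  case (Suc j)
  then obtain a where a: "e ((f^^Suc j) v) = P.gact [:a, -2 * of_nat (Suc j):] ((f^^j) v)" by blast
  define b where "b = (-2 * of_nat (Suc j) :: complex)"
  define x where "x = (f^^j) v"
  have b': "-2 * of_nat (Suc (Suc j)) = b - 2" by (simp add: b_def algebra_simps)
  have a': "e (f x) = sc a x + sc b (T0 x)" using a by (simp add: x_def b_def P.gact_X)
  have "e ((f^^Suc (Suc j)) v) = f (e (f x)) - T0 (f x) - T0 (f x)"
    by (simp add: ef x_def)
  also have "\<dots> = sc a (f x) + sc b (T0 (f x) - f x) - T0 (f x) - T0 (f x)"
    by (simp only: a' lin_f fT)
  also have "\<dots> = P.gact [:a - b, b - 2:] ((f^^Suc j) v)"
  proof -
    have 1: "sc (a - b) y = sc a y - sc b y" for y by (rule vs.scale_left_diff_distrib)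
    have 2: "sc (b - 2) y = sc b y - (y + y)" for y by (simp only: vs.scale_left_diff_distrib sc2)
    show ?thesis
      by (simp only: P.gact_X 1 2 x_def[symmetric] funpow.simps o_apply vs.scale_right_diff_distrib)
        (simp add: algebra_simps)
  qed
  finally show ?case unfolding b' by blast
qed

end

locale sl2rat = sl2ctx +
  assumes rat: "rational sc e f h UNIV"
begin

lemma P_bij: "p \<noteq> 0 \<Longrightarrow> bij (P.gact p)"
  using rat by (simp add: rational_def PA T0_def[symmetric])

lemma P_inj: "p \<noteq> 0 \<Longrightarrow> P.gact p x = 0 \<Longrightarrow> x = 0"
  using P_bij[of p] unfolding bij_def inj_def by (metis P.gact_zero_v)

lemma P_surj: "p \<noteq> 0 \<Longrightarrow> \<exists>x. P.gact p x = y"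
  using P_bij[of p] unfolding bij_def by (metis surjD)

lemma gens: "\<exists>S. finite S \<and> (\<forall>u. \<exists>q c. q \<noteq> 0 \<and> P.gact q u = (\<Sum>s\<in>S. P.gact (c s) s))"
  using rat by (auto simp add: rational_def PA T0_def[symmetric])

lemma DEP: "\<exists>d::nat. \<forall>w. \<exists>\<beta>. (\<exists>i\<le>d. \<beta> i \<noteq> 0) \<and> (\<Sum>i\<le>d. P.gact (\<beta> i) (w i)) = 0"
proof -
  obtain S where S: "finite S" "\<And>u. \<exists>q c. q \<noteq> 0 \<and> P.gact q u = (\<Sum>s\<in>S. P.gact (c s) s)"
    using gens by blast
  define d where "d = card S"
  have H: "\<exists>\<beta>. (\<exists>i\<le>d. \<beta> i \<noteq> 0) \<and> (\<Sum>i\<le>d. P.gact (\<beta> i) (w i)) = 0" for w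
  proof -
    have "\<forall>i. \<exists>q. \<exists>c. q \<noteq> 0 \<and> P.gact q (w i) = (\<Sum>s\<in>S. P.gact (c s) s)" by (intro allI S(2))
    from choice[OF this] obtain q where "\<forall>i. \<exists>c. q i \<noteq> 0 \<and> P.gact (q i) (w i) = (\<Sum>s\<in>S. P.gact (c s) s)"
      by blast
    from choice[OF this] obtain c where qc': "\<forall>i. q i \<noteq> 0 \<and> P.gact (q i) (w i) = (\<Sum>s\<in>S. P.gact (c i s) s)"
      by blast
    have qc: "\<And>i. q i \<noteq> 0" "\<And>i. P.gact (q i) (w i) = (\<Sum>s\<in>S. P.gact (c i s) s)"
      using qc' by auto
    define I where "I = {..d}"
    define Q' where "Q' i = (\<Prod>l\<in>I-{i}. q l)" for i
    define Q where "Q = (\<Prod>l\<in>I. q l)"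
    have QQ: "i \<in> I \<Longrightarrow> Q = q i * Q' i" for i
      unfolding Q_def Q'_def I_def by (simp add: prod.remove)
    have Q0: "Q \<noteq> 0" unfolding Q_def I_def using qc(1) by simp
    have "card S < card I" by (simp add: I_def d_def)
    from idom_dep[OF S(1) _ this, of "\<lambda>i s. Q' i * c i s"]
    obtain \<beta> where b: "\<exists>i\<in>I. \<beta> i \<noteq> 0" "\<forall>s\<in>S. (\<Sum>i\<in>I. \<beta> i * (Q' i * c i s)) = 0"
      by (auto simp: I_def)
    have "P.gact Q (\<Sum>i\<in>I. P.gact (\<beta> i) (w i)) = (\<Sum>i\<in>I. P.gact (\<beta> i * Q' i) (P.gact (q i) (w i)))"
    proof -
      have "P.gact Q (P.gact (\<beta> i) (w i)) = P.gact (\<beta> i * Q' i) (P.gact (q i) (w i))" if i: "i \<in> I" for i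
        by (simp only: P.gact_mult[symmetric] QQ[OF i]) (simp only: mult_ac)
      then show ?thesis by (simp add: P.gact_sum_v)
    qed
    also have "\<dots> = (\<Sum>i\<in>I. \<Sum>s\<in>S. P.gact (\<beta> i * (Q' i * c i s)) s)"
      by (simp add: qc(2) P.gact_sum_v P.gact_mult mult.assoc)
    also have "\<dots> = (\<Sum>s\<in>S. P.gact (\<Sum>i\<in>I. \<beta> i * (Q' i * c i s)) s)"
      by (subst sum.swap) (simp add: P.gact_sum)
    also have "\<dots> = 0" using b(2) by simp
    finally have "(\<Sum>i\<in>I. P.gact (\<beta> i) (w i)) = 0" by (rule P_inj[OF Q0])
    moreover have "\<exists>i\<le>d. \<beta> i \<noteq> 0" using b(1) unfolding I_def by auto
    ultimately show ?thesis unfolding I_def by (intro exI[of _ \<beta>] conjI)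
  qed
  show ?thesis by (rule exI[of _ d], rule allI, rule H)
qed

lemma e_sum: "e (sum g A) = (\<Sum>x\<in>A. e (g x))"
proof -
  interpret additive e by standard (rule lin_e)
  show ?thesis by (rule sum)
qed

lemma e_inj: "e v = 0 \<Longrightarrow> v = 0"
proof (rule ccontr)
  assume ev: "e v = 0" and v0: "v \<noteq> 0"
  have "\<forall>j. \<exists>a. e ((f^^Suc j) v) = P.gact [:a, -2 * of_nat (Suc j):] ((f^^j) v)"
    using e_f_pow[OF ev] by blast
  then obtain a where a: "\<And>j. e ((f^^Suc j) v) = P.gact [:a j, -2 * of_nat (Suc j):] ((f^^j) v)"
    by metis
  have nz: "[:a j, -2 * of_nat (Suc j):] \<noteq> 0" for j
  proof -
    have "(-2 * of_nat (Suc j) :: complex) \<noteq> 0" by (simp only: mult_eq_0_iff of_nat_eq_0_iff) simp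
    then show ?thesis by (simp only: pCons_eq_0_iff) simp
  qed
  have indep: "(\<Sum>i\<le>d. P.gact (\<beta> i) ((f^^i) v)) = 0 \<Longrightarrow> \<forall>i\<le>d. \<beta> i = 0" for d \<beta>
  proof (induction d arbitrary: \<beta>)
    case 0
    then show ?case using P_inj v0 by auto
  next
    case (Suc d)
    have split: "(\<Sum>i\<le>Suc d. P.gact (\<beta> i) ((f^^i) v))
       = P.gact (\<beta> 0) v + (\<Sum>i\<le>d. P.gact (\<beta> (Suc i)) ((f^^Suc i) v))"
      by (simp only: sum.atMost_Suc_shift funpow_0)
    have "e (\<Sum>i\<le>Suc d. P.gact (\<beta> i) ((f^^i) v)) =
       (\<Sum>i\<le>d. P.gact (pcompose (\<beta> (Suc i)) [:1,1:] * [:a i, -2 * of_nat (Suc i):]) ((f^^i) v))"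
    proof -
      have t: "e (P.gact (\<beta> (Suc i)) ((f^^Suc i) v)) = P.gact (pcompose (\<beta> (Suc i)) [:1,1:] * [:a i, -2 * of_nat (Suc i):]) ((f^^i) v)" for i
        by (simp only: P_e_sigma a P.gact_mult)
      have t0: "e (P.gact (\<beta> 0) v) = 0" by (simp only: P_e_sigma ev P.gact_zero_v)
      show ?thesis unfolding split by (simp only: lin_e e_sum t t0 add_0_left)
    qed
    with Suc.prems have "(\<Sum>i\<le>d. P.gact (pcompose (\<beta> (Suc i)) [:1,1:] * [:a i, -2 * of_nat (Suc i):]) ((f^^i) v)) = 0"
      by (simp add: e_z)
    from Suc.IH[OF this] have IH': "\<forall>i\<le>d. pcompose (\<beta> (Suc i)) [:1,1:] * [:a i, -2 * of_nat (Suc i):] = 0" .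
    have "\<forall>i\<le>d. pcompose (\<beta> (Suc i)) [:1,1:] = 0"
    proof (intro allI impI)
      fix i assume "i \<le> d"
      with IH' have "pcompose (\<beta> (Suc i)) [:1,1:] * [:a i, -2 * of_nat (Suc i):] = 0" by blast
      with nz[of i] show "pcompose (\<beta> (Suc i)) [:1,1:] = 0" by (simp only: mult_eq_0_iff) blast
    qed
    have bs: "\<forall>i\<le>d. \<beta> (Suc i) = 0"
    proof -
      have deg: "degree [:1,1::complex:] > 0" by simp
      show ?thesis using pcompose_eq_0[OF _ deg] \<open>\<forall>i\<le>d. pcompose (\<beta> (Suc i)) [:1,1:] = 0\<close> by blast
    qed
    have "(\<Sum>i\<le>d. P.gact (\<beta> (Suc i)) ((f^^Suc i) v)) = 0"
    proof (rule sum.neutral, intro ballI)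
      fix i assume "i \<in> {..d}"
      then have "\<beta> (Suc i) = 0" using bs by auto
      then show "P.gact (\<beta> (Suc i)) ((f^^Suc i) v) = 0" by (simp only: P.gact_0)
    qed
    then have "P.gact (\<beta> 0) v = 0" using Suc.prems unfolding split by (simp only: add_0_right)
    then have b0: "\<beta> 0 = 0" using P_inj v0 by blast
    show ?case
    proof (intro allI impI)
      fix i assume "i \<le> Suc d"
      then show "\<beta> i = 0" using b0 bs by (cases i) auto
    qed
  qed
  obtain d :: nat where D: "\<forall>w. \<exists>\<beta>. (\<exists>i\<le>d. \<beta> i \<noteq> 0) \<and> (\<Sum>i\<le>d. P.gact (\<beta> i) (w i)) = 0"
    using DEP by (elim exE)
  have "\<exists>\<beta>. (\<exists>i\<le>d. \<beta> i \<noteq> 0) \<and> (\<Sum>i\<le>d. P.gact (\<beta> i) ((f^^i) v)) = 0"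
    using spec[OF D, of "\<lambda>i. (f^^i) v"] by (simp only:)
  then obtain \<beta> where bb: "(\<exists>i\<le>d. \<beta> i \<noteq> 0) \<and> (\<Sum>i\<le>d. P.gact (\<beta> i) ((f^^i) v)) = 0"
    by (rule exE)
  from indep[OF conjunct2[OF bb]] conjunct1[OF bb] show False by blast
qed

end


lemma shift_const:
  fixes p q :: "complex poly"
  assumes q0: "q \<noteq> 0" and eq: "pcompose q [:-1,1:] * p = q * pcompose p [:-1,1:]"
  shows "\<exists>c. p = smult c q"
proof -
  have ev: "poly q (z - 1) * poly p z = poly q z * poly p (z - 1)" for z
    using arg_cong[OF eq, of "\<lambda>r. poly r z"] by (simp add: poly_pcompose algebra_simps)
  define R where "R = {x. poly q x = 0}"
  have "finite R" unfolding R_def using poly_roots_finite[OF q0] .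
  then have "finite (Im ` R)" by simp
  then obtain y where y: "y \<notin> Im ` R" using ex_new_if_finite[OF infinite_UNIV_char_0] by blast
  define z0 where "z0 = Complex 0 y"
  have qn: "poly q (z0 + of_nat n) \<noteq> 0" for n
  proof
    assume "poly q (z0 + of_nat n) = 0"
    then have "z0 + of_nat n \<in> R" by (simp add: R_def)
    then have "Im (z0 + of_nat n) \<in> Im ` R" by blast
    then show False using y by (simp add: z0_def)
  qed
  define c where "c = poly p z0 / poly q z0"
  have pn: "poly p (z0 + of_nat n) = c * poly q (z0 + of_nat n)" for n
  proof (induction n)
    case 0
    then show ?case using qn[of 0] by (simp add: c_def)
  next
    case (Suc n)
    have "poly q (z0 + of_nat n) * poly p (z0 + of_nat (Suc n)) =
          poly q (z0 + of_nat (Suc n)) * poly p (z0 + of_nat n)"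
      using ev[of "z0 + of_nat (Suc n)"] by (simp add: algebra_simps)
    also have "\<dots> = poly q (z0 + of_nat n) * (c * poly q (z0 + of_nat (Suc n)))"
      using Suc.IH by (simp add: algebra_simps)
    finally show ?case using qn[of n] by simp
  qed
  define r where "r = p - smult c q"
  have "r = 0"
  proof (rule ccontr)
    assume "r \<noteq> 0"
    then have fin: "finite {x. poly r x = 0}" by (rule poly_roots_finite)
    have "range (\<lambda>n::nat. z0 + of_nat n) \<subseteq> {x. poly r x = 0}"
      using pn by (auto simp: r_def)
    moreover have "infinite (range (\<lambda>n::nat. z0 + of_nat n))"
      by (rule range_inj_infinite) (auto simp: inj_def)
    ultimately show False using fin finite_subset by blast
  qed
  then show ?thesis unfolding r_def by auto
qed

context sl2rat
begin

lemma CC_e_pow: "(CC^^i) (e w) = e ((CC^^i) w)"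
  by (induction i) (simp_all add: e_CC)

definition tau :: "complex poly poly \<Rightarrow> complex poly poly" where
  "tau F = map_poly (\<lambda>a. pcompose a [:-1,1:]) F"

lemma coeff_tau: "coeff (tau F) i = pcompose (coeff F i) [:-1,1:]"
  unfolding tau_def by (rule coeff_map_poly) simp

lemma act_e: "A2.gact F (e w) = e (A2.gact (tau F) w)"
proof -
  define N where "N = Suc (degree F)"
  have d1: "degree F < N" and d2: "degree (tau F) < N"
    using map_poly_degree_leq[of "\<lambda>a. pcompose a [:-1,1:]" F] by (auto simp: N_def tau_def)
  have "A2.gact F (e w) = (\<Sum>i<N. P.gact (coeff F i) ((CC^^i) (e w)))" by (rule A2.gact_N[OF d1])
  also have "\<dots> = (\<Sum>i<N. e (P.gact (coeff (tau F) i) ((CC^^i) w)))"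
    by (simp only: CC_e_pow P_e_tau coeff_tau)
  also have "\<dots> = e (A2.gact (tau F) w)" by (simp only: A2.gact_N[OF d2] e_sum)
  finally show ?thesis .
qed

lemma ann_vec: "\<exists>F. F \<noteq> 0 \<and> A2.gact F x = 0"
proof -
  obtain d :: nat where D: "\<forall>w. \<exists>\<beta>. (\<exists>i\<le>d. \<beta> i \<noteq> 0) \<and> (\<Sum>i\<le>d. P.gact (\<beta> i) (w i)) = 0"
    using DEP by (elim exE)
  have "\<exists>\<beta>. (\<exists>i\<le>d. \<beta> i \<noteq> 0) \<and> (\<Sum>i\<le>d. P.gact (\<beta> i) ((CC^^i) x)) = 0"
    using spec[OF D, of "\<lambda>i. (CC^^i) x"] by (simp only:)
  then obtain \<beta> where bb: "(\<exists>i\<le>d. \<beta> i \<noteq> 0) \<and> (\<Sum>i\<le>d. P.gact (\<beta> i) ((CC^^i) x)) = 0"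
    by (rule exE)
  define F where "F = (\<Sum>i\<le>d. monom (\<beta> i) i)"
  have cF: "coeff F j = (if j \<le> d then \<beta> j else 0)" for j
    unfolding F_def coeff_sum coeff_monom by (simp add: sum.delta)
  from conjunct1[OF bb] obtain i where "i \<le> d" "\<beta> i \<noteq> 0" by blast
  then have "coeff F i \<noteq> 0" by (simp add: cF)
  then have "F \<noteq> 0" by auto
  moreover have "A2.gact F x = 0"
    unfolding F_def A2.gact_sum A2.gact_monom using conjunct2[OF bb] .
  ultimately show ?thesis by blast
qed

lemma ann_set: "finite S \<Longrightarrow> \<exists>F. F \<noteq> 0 \<and> (\<forall>s\<in>S. A2.gact F s = 0)"
proof (induction S rule: finite_induct)
  case empty
  then show ?case by (rule_tac x=1 in exI) simp
next
  case (insert x S)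
  then obtain F where F: "F \<noteq> 0" "\<forall>s\<in>S. A2.gact F s = 0" by blast
  obtain G where G: "G \<noteq> 0" "A2.gact G x = 0" using ann_vec by blast
  have "G * F \<noteq> 0" using F G by simp
  moreover have "\<forall>s\<in>insert x S. A2.gact (G * F) s = 0"
  proof
    fix s assume "s \<in> insert x S"
    then show "A2.gact (G * F) s = 0"
    proof
      assume "s = x"
      then show ?thesis using G by (simp only: mult.commute[of G F] A2.gact_mult A2.gact_zero_v)
    next
      assume "s \<in> S"
      then show ?thesis using F by (simp only: A2.gact_mult A2.gact_zero_v)
    qed
  qed
  ultimately show ?case by blast
qed

lemma ann_exists: "\<exists>F. F \<noteq> 0 \<and> (\<forall>v. A2.gact F v = 0)"
proof -
  obtain S where S: "finite S" "\<And>u. \<exists>q c. q \<noteq> 0 \<and> P.gact q u = (\<Sum>s\<in>S. P.gact (c s) s)"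
    using gens by blast
  obtain F where F: "F \<noteq> 0" "\<forall>s\<in>S. A2.gact F s = 0" using ann_set[OF S(1)] by blast
  have "A2.gact F u = 0" for u
  proof -
    obtain q c where qc: "q \<noteq> 0" "P.gact q u = (\<Sum>s\<in>S. P.gact (c s) s)" using S(2) by blast
    have "P.gact q (A2.gact F u) = A2.gact F (P.gact q u)" by (simp only: A2.gact_s_v)
    also have "\<dots> = (\<Sum>s\<in>S. P.gact (c s) (A2.gact F s))" by (simp only: qc(2) A2.gact_sum_v A2.gact_s_v)
    also have "\<dots> = 0" using F(2) by simp
    finally show ?thesis using P_inj[OF qc(1)] by blast
  qed
  then show ?thesis using F(1) by blast
qed

end


context sl2rat
begin

lemma min_poly:
  "\<exists>g. g \<noteq> 0 \<and> (\<forall>v. Cs.gact g v = 0) \<and>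
       (\<forall>h. h \<noteq> 0 \<and> (\<forall>v. Cs.gact h v = 0) \<longrightarrow> degree g \<le> degree h)"
proof -
  define Ann where "Ann = {F. F \<noteq> 0 \<and> (\<forall>v. A2.gact F v = 0)}"
  define k where "k = (LEAST n. \<exists>F\<in>Ann. degree F = n)"
  have ex: "\<exists>n. \<exists>F\<in>Ann. degree F = n" using ann_exists by (auto simp: Ann_def)
  from LeastI_ex[OF ex] obtain F where F: "F \<in> Ann" "degree F = k" unfolding k_def by blast
  have minim: "G \<in> Ann \<Longrightarrow> k \<le> degree G" for G
    unfolding k_def by (rule Least_le) blast
  have F0: "F \<noteq> 0" and Fv: "\<And>v. A2.gact F v = 0" using F(1) by (auto simp: Ann_def)
  have Ftau: "A2.gact (tau F) w = 0" for w
    using e_inj act_e[of F w] Fv[of "e w"] by simp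
  define lc where "lc = coeff F k"
  have lc0: "lc \<noteq> 0" using F0 F(2)[symmetric] by (simp add: lc_def)
  define G where "G = smult (coeff (tau F) k) F - smult lc (tau F)"
  have Gv: "A2.gact G v = 0" for v
    by (simp only: G_def A2.gact_diff A2.gact_smult Fv Ftau A2.gact_zero_v P.gact_zero_v diff_self)
  have degtau: "degree (tau F) \<le> k"
    using map_poly_degree_leq[of "\<lambda>a. pcompose a [:-1,1:]" F] F(2) by (simp add: tau_def)
  have degG: "degree G \<le> k"
    unfolding G_def using degtau F(2)
    by (intro degree_diff_le order.trans[OF degree_smult_le]) auto
  have cG: "coeff G k = 0" by (simp add: G_def lc_def)
  have G0: "G = 0"
  proof (rule ccontr)
    assume "G \<noteq> 0"
    then have "G \<in> Ann" using Gv by (simp add: Ann_def)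
    then have "k \<le> degree G" by (rule minim)
    then have "degree G = k" using degG by simp
    then show False using cG \<open>G \<noteq> 0\<close> by (metis leading_coeff_0_iff)
  qed
  have rel: "pcompose lc [:-1,1:] * coeff F i = lc * pcompose (coeff F i) [:-1,1:]" for i
  proof -
    have "coeff G i = 0" using G0 by simp
    then show ?thesis by (simp add: G_def coeff_tau lc_def[symmetric] algebra_simps)
  qed
  have "\<forall>i. \<exists>c. coeff F i = smult c lc"
    using shift_const[OF lc0 rel] by blast
  then obtain cf where cf: "\<And>i. coeff F i = smult (cf i) lc" by metis
  define m where "m = degree lc"
  have lcm: "coeff lc m \<noteq> 0" using lc0 by (simp add: m_def)
  define g where "g = map_poly (\<lambda>a. coeff a m / coeff lc m) F"
  have cg: "coeff g i = cf i" for i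
  proof -
    have "coeff g i = coeff (coeff F i) m / coeff lc m" unfolding g_def by (rule coeff_map_poly) simp
    also have "\<dots> = cf i" using lcm by (simp add: cf)
    finally show ?thesis .
  qed
  have cFg: "coeff F i = smult (coeff g i) lc" for i by (simp add: cg cf)
  have degg: "degree g \<le> k" using map_poly_degree_leq F(2) unfolding g_def by metis
  have "cf k = 1"
  proof -
    have "lc = smult (cf k) lc" using cf[of k] by (simp add: lc_def)
    moreover have "smult (cf k - 1) lc = smult (cf k) lc - lc" by (simp add: smult_diff_left)
    ultimately have "smult (cf k - 1) lc = 0" by simp
    then show ?thesis using lc0 by simp
  qed
  then have cgk: "coeff g k = 1" by (simp add: cg)
  then have g0: "g \<noteq> 0" by auto
  have degg': "degree g = k" using degg le_degree[of g k] cgk by simp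
  have gv: "Cs.gact g v = 0" for v
  proof -
    have d1: "degree F < Suc k" and d2: "degree g < Suc k" using F(2) degg by auto
    have "A2.gact F v = (\<Sum>i<Suc k. P.gact (smult (coeff g i) lc) ((CC^^i) v))"
      by (simp only: A2.gact_N[OF d1] cFg)
    also have "\<dots> = P.gact lc (Cs.gact g v)"
      by (simp only: Cs.gact_N[OF d2] P.gact_smult P.gact_sum_v P.gact_s_v)
    finally have "P.gact lc (Cs.gact g v) = 0" using Fv by simp
    then show ?thesis using P_inj[OF lc0] by blast
  qed
  have "degree g \<le> degree h" if h0: "h \<noteq> 0" and hv: "\<forall>v. Cs.gact h v = 0" for h
  proof -
    define H where "H = map_poly (\<lambda>c. [:c:]) h"
    have degH: "degree H = degree h" unfolding H_def by (rule degree_map_poly) simp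
    have cH: "coeff H i = [:coeff h i:]" for i unfolding H_def by (rule coeff_map_poly) simp
    have "H \<noteq> 0"
    proof
      assume "H = 0"
      then have "coeff h (degree h) = 0" using cH[of "degree h"] by simp
      then show False using h0 by simp
    qed
    moreover have "A2.gact H v = 0" for v
    proof -
      have d: "degree H < Suc (degree h)" "degree h < Suc (degree h)" using degH by auto
      have "A2.gact H v = Cs.gact h v"
        by (simp only: A2.gact_N[OF d(1)] Cs.gact_N[OF d(2)] cH P.gact_const)
      then show ?thesis using hv by simp
    qed
    ultimately have "H \<in> Ann" by (simp add: Ann_def)
    then have "k \<le> degree H" by (rule minim)
    then show ?thesis using degH degg' by simp
  qed
  then show ?thesis using g0 gv by blast
qed

end


lemma bezout_nocommon:
  fixes A r :: "complex poly"
  assumes nc: "\<And>z. poly A z = 0 \<Longrightarrow> poly r z \<noteq> 0" and nz: "A \<noteq> 0"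
  shows "\<exists>u w. u * A + w * r = 1"
proof -
  define I where "I = {p. p \<noteq> 0 \<and> (\<exists>u w. p = u * A + w * r)}"
  have "A = 1 * A + 0 * r" by simp
  then have "A \<in> I" unfolding I_def using nz by blast
  then have ex: "\<exists>n. \<exists>p\<in>I. degree p = n" by blast
  define k where "k = (LEAST n. \<exists>p\<in>I. degree p = n)"
  from LeastI_ex[OF ex] obtain d where d: "d \<in> I" "degree d = k" unfolding k_def by blast
  have minim: "p \<in> I \<Longrightarrow> k \<le> degree p" for p unfolding k_def by (rule Least_le) blast
  from d(1) obtain u0 w0 where d0: "d \<noteq> 0" and du: "d = u0 * A + w0 * r" by (auto simp: I_def)
  have dvd: "d dvd x" if x: "\<exists>u w. x = u * A + w * r" for x
  proof (rule ccontr)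
    assume nd: "\<not> d dvd x"
    then have m0: "x mod d \<noteq> 0" by (simp add: dvd_eq_mod_eq_0)
    from x obtain u w where xu: "x = u * A + w * r" by blast
    have "x mod d = x - x div d * d" using div_mult_mod_eq[of x d] by (simp add: algebra_simps)
    also have "\<dots> = (u - x div d * u0) * A + (w - x div d * w0) * r"
      by (simp add: xu du algebra_simps)
    finally have "x mod d \<in> I" using m0 unfolding I_def by blast
    then have "k \<le> degree (x mod d)" by (rule minim)
    moreover have "degree (x mod d) < degree d" using degree_mod_less'[OF d0 m0] .
    ultimately show False using d(2) by simp
  qed
  have "A = 1 * A + 0 * r" by simp
  then have dA: "d dvd A" by (intro dvd) blast
  have "r = 0 * A + 1 * r" by simp
  then have dr: "d dvd r" by (intro dvd) blast
  have "degree d = 0"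
  proof (rule ccontr)
    assume "degree d \<noteq> 0"
    then have "\<not> constant (poly d)" by (simp add: constant_degree)
    then obtain z where z: "poly d z = 0" using fundamental_theorem_of_algebra by blast
    from dA obtain a where "A = d * a" by (elim dvdE)
    then have "poly A z = 0" using z by simp
    moreover from dr obtain b where "r = d * b" by (elim dvdE)
    then have "poly r z = 0" using z by simp
    ultimately show False using nc by blast
  qed
  then obtain c where dc: "d = [:c:]" by (metis degree_eq_zeroE)
  with d0 have c0: "c \<noteq> 0" by simp
  have "smult (1/c) u0 * A + smult (1/c) w0 * r = smult (1/c) d"
    by (simp add: du smult_add_right)
  also have "\<dots> = 1" using c0 by (simp add: dc one_pCons)
  finally show ?thesis by blast
qed

context sl2rat
begin

lemma sc_cancel: "c \<noteq> 0 \<Longrightarrow> sc c x = 0 \<Longrightarrow> x = 0"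
proof -
  assume c: "c \<noteq> 0" and x: "sc c x = 0"
  have "x = sc (1/c) (sc c x)" using c by simp
  also have "\<dots> = 0" using x by simp
  finally show ?thesis .
qed

lemma h_CC: "h (CC x) = CC (h x)"
  by (simp add: h_T0 T0_CC CC_z lin_CC)

lemma ker_sub: "sl2_submodule sc e f h {v. Cs.gact p v = 0}"
proof -
  have ce: "e (Cs.gact p v) = Cs.gact p (e v)" for v
    by (rule Cs.gact_comm) (simp_all add: lin_e e_CC)
  have cf: "f (Cs.gact p v) = Cs.gact p (f v)" for v
    by (rule Cs.gact_comm) (simp_all add: lin_f f_CC)
  have ch: "h (Cs.gact p v) = Cs.gact p (h v)" for v
    by (rule Cs.gact_comm) (simp_all add: lin_h h_CC)
  show ?thesis
    unfolding sl2_submodule_def vs.subspace_def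
    by (auto simp: Cs.gact_add_v Cs.gact_s_v ce[symmetric] cf[symmetric] ch[symmetric] e_z f_z h_z)
qed

lemma casimir_CC: "casimir sc e f h = CC" by (simp add: CC_def)

lemma gen_cas:
  assumes ind: "indecomposable sc e f h UNIV"
  shows "gen_casimir sc e f h UNIV"
proof -
  obtain g where g0: "g \<noteq> 0" and gv: "\<And>v. Cs.gact g v = 0"
    and gmin: "\<And>h'. h' \<noteq> 0 \<Longrightarrow> (\<forall>v. Cs.gact h' v = 0) \<Longrightarrow> degree g \<le> degree h'"
    using min_poly by blast
  have nz: "UNIV \<noteq> {0::'a}" using ind by (simp add: indecomposable_def indecomp_wrt_def)
  then obtain v0 :: 'a where v0: "v0 \<noteq> 0" by blast
  have UNIVsub: "sl2_submodule sc e f h UNIV" by (simp add: sl2_submodule_def)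
  have "degree g \<noteq> 0"
  proof
    assume "degree g = 0"
    then obtain c where gc: "g = [:c:]" by (metis degree_eq_zeroE)
    then have "c \<noteq> 0" using g0 by simp
    moreover have "sc c v0 = 0" using gv[of v0] by (simp add: gc)
    ultimately show False using sc_cancel v0 by blast
  qed
  then have "\<not> constant (poly g)" by (simp add: constant_degree)
  then obtain \<mu> where root: "poly g \<mu> = 0" using fundamental_theorem_of_algebra by blast
  define m where "m = order \<mu> g"
  have m0: "m \<noteq> 0" using root g0 order_root[of g \<mu>] by (simp add: m_def)
  obtain r where gr: "g = [:-\<mu>, 1:] ^ m * r" and ndvd: "\<not> [:-\<mu>, 1:] dvd r"
    using order_decomp[OF g0] unfolding m_def by blast
  define A where "A = ([:-\<mu>, 1:] ^ m :: complex poly)"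
  have r0: "r \<noteq> 0" using g0 gr by auto
  have degA: "degree A = m" by (simp add: A_def degree_linear_power)
  have degg: "degree g = m + degree r" using gr r0 by (simp add: degree_mult_eq A_def degree_linear_power)
  show ?thesis
  proof (cases "degree r = 0")
    case True
    then obtain r0' where rr: "r = [:r0':]" by (metis degree_eq_zeroE)
    then have r00: "r0' \<noteq> 0" using r0 by simp
    have "Cs.gact A v = 0" for v
    proof -
      have "sc r0' (Cs.gact A v) = Cs.gact g v"
        by (simp only: gr A_def[symmetric] Cs.gact_mult rr Cs.gact_const Cs.gact_s_v)
      then show ?thesis using gv sc_cancel[OF r00] by metis
    qed
    then have "\<forall>u. ((\<lambda>v. casimir sc e f h v - sc \<mu> v) ^^ m) u = 0"
      by (simp add: casimir_CC A_def Cs.gact_power_lin[symmetric])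
    then show ?thesis using UNIVsub m0 unfolding gen_casimir_def
      by (intro conjI exI[of _ \<mu>] exI[of _ m]) auto
  next
    case False
    have rmu: "poly r \<mu> \<noteq> 0" using ndvd by (simp add: poly_eq_0_iff_dvd)
    have nc: "poly A z = 0 \<Longrightarrow> poly r z \<noteq> 0" for z
      using rmu by (simp add: A_def)
    have "A \<noteq> 0" by (simp add: A_def)
    from bezout_nocommon[OF nc this] obtain u w where bez: "u * A + w * r = 1" by blast
    have gAr: "g = A * r" by (simp add: gr A_def)
    define KA where "KA = {v. Cs.gact A v = 0}"
    define KR where "KR = {v. Cs.gact r v = 0}"
    have subA: "sl2_submodule sc e f h KA" unfolding KA_def by (rule ker_sub)
    have subR: "sl2_submodule sc e f h KR" unfolding KR_def by (rule ker_sub)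
    have decomp: "v = Cs.gact (w * r) v + Cs.gact (u * A) v" for v
    proof -
      have "Cs.gact (w * r) v + Cs.gact (u * A) v = Cs.gact (u * A + w * r) v"
        by (simp add: Cs.gact_add)
      then show ?thesis by (simp add: bez)
    qed
    have inA: "Cs.gact (w * r) v \<in> KA" for v
    proof -
      have "Cs.gact A (Cs.gact (w * r) v) = Cs.gact w (Cs.gact g v)"
        by (simp only: Cs.gact_mult[symmetric] gAr mult_ac)
      then show ?thesis by (simp add: KA_def gv)
    qed
    have inR: "Cs.gact (u * A) v \<in> KR" for v
    proof -
      have "Cs.gact r (Cs.gact (u * A) v) = Cs.gact u (Cs.gact g v)"
        by (simp only: Cs.gact_mult[symmetric] gAr mult_ac)
      then show ?thesis by (simp add: KR_def gv)
    qed
    have ds: "direct_sum UNIV KA KR"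
      unfolding direct_sum_def
    proof
      show "UNIV = {a + b |a b. a \<in> KA \<and> b \<in> KR}"
        using decomp inA inR by blast
      show "KA \<inter> KR = {0}"
      proof
        show "KA \<inter> KR \<subseteq> {0}"
        proof
          fix x assume x: "x \<in> KA \<inter> KR"
          have "x = Cs.gact (w * r) x + Cs.gact (u * A) x" by (rule decomp)
          also have "\<dots> = 0" using x by (simp add: KA_def KR_def Cs.gact_mult)
          finally show "x \<in> {0}" by simp
        qed
        show "{0} \<subseteq> KA \<inter> KR" by (simp add: KA_def KR_def)
      qed
    qed
    have KA0: "KA \<noteq> {0}"
    proof
      assume K: "KA = {0}"
      have "Cs.gact r v = 0" for v
      proof -
        have "Cs.gact A (Cs.gact r v) = Cs.gact g v" by (simp only: gAr Cs.gact_mult)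
        then have "Cs.gact r v \<in> KA" by (simp add: KA_def gv)
        then show ?thesis using K by simp
      qed
      then have "degree g \<le> degree r" using gmin r0 by blast
      then show False using degg m0 by simp
    qed
    have KR0: "KR \<noteq> {0}"
    proof
      assume K: "KR = {0}"
      have "Cs.gact A v = 0" for v
      proof -
        have "Cs.gact r (Cs.gact A v) = Cs.gact g v" by (simp only: gAr mult.commute[of A r] Cs.gact_mult)
        then have "Cs.gact A v \<in> KR" by (simp add: KR_def gv)
        then show ?thesis using K by simp
      qed
      moreover have "A \<noteq> 0" by (simp add: A_def)
      ultimately have "degree g \<le> degree A" using gmin by blast
      then show False using degg degA False by simp
    qed
    have False using ind subA subR KA0 KR0 ds
      unfolding indecomposable_def indecomp_wrt_def by blast
    then show ?thesis ..
  qed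
qed

end


context sl2rat
begin

lemma sub_T0: "sl2_submodule sc e f h A \<Longrightarrow> a \<in> A \<Longrightarrow> T0 a \<in> A"
  unfolding sl2_submodule_def T0_def' using vs.subspace_scale by blast

lemma sub_P: "sl2_submodule sc e f h A \<Longrightarrow> a \<in> A \<Longrightarrow> P.gact p a \<in> A"
proof (induction p)
  case 0
  then show ?case using vs.subspace_0 by (simp add: sl2_submodule_def)
next
  case (pCons c p)
  have sA: "vs.subspace A" using pCons.prems by (simp add: sl2_submodule_def)
  show ?case unfolding P.gact_pCons
    by (rule vs.subspace_add[OF sA vs.subspace_scale[OF sA pCons.prems(2)]])
      (rule sub_T0[OF pCons.prems(1) pCons.IH[OF pCons.prems]])
qed

lemma direct_sum_sym: "direct_sum U A B \<Longrightarrow> direct_sum U B A"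
  unfolding direct_sum_def by (auto simp: Int_commute) (metis add.commute)+

lemma summand_rational:
  assumes sA: "sl2_submodule sc e f h A" and sB: "sl2_submodule sc e f h B"
    and ds: "direct_sum UNIV A B"
  shows "rational sc e f h A"
proof -
  have spA: "vs.subspace A" and spB: "vs.subspace B" using sA sB by (auto simp: sl2_submodule_def)
  have AB: "A \<inter> B = {0}" and dec: "\<And>v. \<exists>a b. v = a + b \<and> a \<in> A \<and> b \<in> B"
    using ds unfolding direct_sum_def by blast+
  have zero: "x \<in> A \<Longrightarrow> x \<in> B \<Longrightarrow> x = 0" for x using AB by blast
  have bij: "bij_betw (P.gact p) A A" if p0: "p \<noteq> 0" for p
  proof -
    have inj: "inj (P.gact p)" using P_bij[OF p0] by (simp add: bij_def)
    have "P.gact p ` A = A"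
    proof
      show "P.gact p ` A \<subseteq> A" using sub_P[OF sA] by blast
      show "A \<subseteq> P.gact p ` A"
      proof
        fix a assume a: "a \<in> A"
        obtain x where x: "P.gact p x = a" using P_surj[OF p0] by blast
        obtain a' b' where ab: "x = a' + b'" "a' \<in> A" "b' \<in> B" using dec by blast
        have "P.gact p b' = a - P.gact p a'" using x ab by (simp add: P.gact_add_v algebra_simps)
        then have "P.gact p b' \<in> A" using a sub_P[OF sA ab(2)] vs.subspace_diff[OF spA] by simp
        moreover have "P.gact p b' \<in> B" using sub_P[OF sB ab(3)] .
        ultimately have "P.gact p b' = 0" using zero by blast
        then have "b' = 0" using P_inj[OF p0] by blast
        then show "a \<in> P.gact p ` A" using x ab by auto
      qed
    qed
    then show ?thesis using inj by (simp add: bij_betw_def inj_on_subset[OF inj])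
  qed
  define \<pi> where "\<pi> v = (SOME a. a \<in> A \<and> v - a \<in> B)" for v
  have \<pi>: "\<pi> v \<in> A \<and> v - \<pi> v \<in> B" for v
  proof -
    obtain a b where "v = a + b" "a \<in> A" "b \<in> B" using dec by blast
    then have "\<exists>a. a \<in> A \<and> v - a \<in> B" by (intro exI[of _ a]) simp
    then show ?thesis unfolding \<pi>_def by (rule someI_ex)
  qed
  have uniq: "a \<in> A \<Longrightarrow> v - a \<in> B \<Longrightarrow> \<pi> v = a" for a v
  proof -
    assume a: "a \<in> A" "v - a \<in> B"
    have 1: "\<pi> v - a \<in> A" by (rule vs.subspace_diff[OF spA conjunct1[OF \<pi>[of v]] a(1)])
    have "(v - a) - (v - \<pi> v) \<in> B" by (rule vs.subspace_diff[OF spB a(2) conjunct2[OF \<pi>[of v]]])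
    moreover have "(v - a) - (v - \<pi> v) = \<pi> v - a" by (simp add: algebra_simps)
    ultimately have 2: "\<pi> v - a \<in> B" by simp
    from zero[OF 1 2] show ?thesis by simp
  qed
  have \<pi>_add: "\<pi> (x + y) = \<pi> x + \<pi> y" for x y
  proof (rule uniq)
    show "\<pi> x + \<pi> y \<in> A" by (rule vs.subspace_add[OF spA conjunct1[OF \<pi>] conjunct1[OF \<pi>]])
    have eq: "x + y - (\<pi> x + \<pi> y) = (x - \<pi> x) + (y - \<pi> y)" by (simp add: algebra_simps)
    show "x + y - (\<pi> x + \<pi> y) \<in> B"
      unfolding eq by (rule vs.subspace_add[OF spB conjunct2[OF \<pi>[of x]] conjunct2[OF \<pi>[of y]]])
  qed
  have \<pi>_P: "\<pi> (P.gact p v) = P.gact p (\<pi> v)" for p v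
  proof (rule uniq)
    show "P.gact p (\<pi> v) \<in> A" by (rule sub_P[OF sA conjunct1[OF \<pi>]])
    have eq: "P.gact p v - P.gact p (\<pi> v) = P.gact p (v - \<pi> v)" by (simp add: P.gact_diff_v)
    show "P.gact p v - P.gact p (\<pi> v) \<in> B" unfolding eq by (rule sub_P[OF sB conjunct2[OF \<pi>[of v]]])
  qed
  have \<pi>_A: "a \<in> A \<Longrightarrow> \<pi> a = a" for a
    by (rule uniq) (simp_all add: vs.subspace_0[OF spB])
  have \<pi>_sum: "\<pi> (sum g X) = (\<Sum>x\<in>X. \<pi> (g x))" for g and X :: "'b set"
  proof -
    interpret additive \<pi> by standard (rule \<pi>_add)
    show ?thesis by (rule sum)
  qed
  obtain S where S: "finite S" "\<And>u. \<exists>q c. q \<noteq> 0 \<and> P.gact q u = (\<Sum>s\<in>S. P.gact (c s) s)"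
    using gens by blast
  have gA: "\<exists>q c. q \<noteq> 0 \<and> P.gact q u = (\<Sum>t\<in>\<pi> ` S. P.gact (c t) t)" if u: "u \<in> A" for u
  proof -
    obtain q c where qc: "q \<noteq> 0" "P.gact q u = (\<Sum>s\<in>S. P.gact (c s) s)" using S(2) by blast
    have "P.gact q u = \<pi> (P.gact q u)" using \<pi>_A sub_P[OF sA u] by simp
    also have "\<dots> = (\<Sum>s\<in>S. P.gact (c s) (\<pi> s))" by (simp add: qc(2) \<pi>_sum \<pi>_P)
    also have "\<dots> = (\<Sum>t\<in>\<pi> ` S. \<Sum>s\<in>{s\<in>S. \<pi> s = t}. P.gact (c s) (\<pi> s))"
      by (rule sum.image_gen[OF S(1)])
    also have "\<dots> = (\<Sum>t\<in>\<pi> ` S. P.gact (\<Sum>s\<in>{s\<in>S. \<pi> s = t}. c s) t)"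
      by (rule sum.cong) (simp_all add: P.gact_sum)
    finally have eq: "P.gact q u = (\<Sum>t\<in>\<pi> ` S. P.gact (\<Sum>s\<in>{s\<in>S. \<pi> s = t}. c s) t)" .
    show ?thesis by (rule exI[of _ q], rule exI[of _ "\<lambda>t. \<Sum>s\<in>{s\<in>S. \<pi> s = t}. c s"]) (simp only: qc(1) eq simp_thms)
  qed
  have PA': "poly_act sc (L0 sc h) = P.gact" using PA by (simp only: T0_def)
  show ?thesis
    unfolding rational_def PA'
  proof (intro conjI allI impI)
    show "sl2_submodule sc e f h A" by (rule sA)
    show "bij_betw (P.gact p) A A" if "p \<noteq> 0" for p using bij that by blast
    show "\<exists>S. finite S \<and> S \<subseteq> A \<and> (\<forall>u\<in>A. \<exists>q c. q \<noteq> 0 \<and> P.gact q u = (\<Sum>s\<in>S. P.gact (c s) s))"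
    proof (rule exI[of _ "\<pi> ` S"], intro conjI)
      show "finite (\<pi> ` S)" using S(1) by simp
      show "\<pi> ` S \<subseteq> A" using \<pi> by blast
      show "\<forall>u\<in>A. \<exists>q c. q \<noteq> 0 \<and> P.gact q u = (\<Sum>s\<in>\<pi> ` S. P.gact (c s) s)" using gA by blast
    qed
  qed
qed

lemma gen_sub: "gen_casimir sc e f h UNIV \<Longrightarrow> sl2_submodule sc e f h A \<Longrightarrow> gen_casimir sc e f h A"
  unfolding gen_casimir_def by blast

lemma rat_sub: "rational sc e f h A \<Longrightarrow> sl2_submodule sc e f h A"
  unfolding rational_def by blast

lemma ind_iff_R: "indecomposable sc e f h UNIV \<longleftrightarrow> R_indecomposable sc e f h UNIV"
proof -
  have "(\<exists>A B. rational sc e f h A \<and> rational sc e f h B \<and> A \<noteq> {0} \<and> B \<noteq> {0} \<and> direct_sum UNIV A B)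
    \<longleftrightarrow> (\<exists>A B. sl2_submodule sc e f h A \<and> sl2_submodule sc e f h B \<and> A \<noteq> {0} \<and> B \<noteq> {0} \<and> direct_sum UNIV A B)"
  proof
    assume "\<exists>A B. rational sc e f h A \<and> rational sc e f h B \<and> A \<noteq> {0} \<and> B \<noteq> {0} \<and> direct_sum UNIV A B"
    then obtain A B where "rational sc e f h A" "rational sc e f h B" "A \<noteq> {0}" "B \<noteq> {0}" "direct_sum UNIV A B"
      by blast
    then show "\<exists>A B. sl2_submodule sc e f h A \<and> sl2_submodule sc e f h B \<and> A \<noteq> {0} \<and> B \<noteq> {0} \<and> direct_sum UNIV A B"
      using rat_sub by blast
  next
    assume "\<exists>A B. sl2_submodule sc e f h A \<and> sl2_submodule sc e f h B \<and> A \<noteq> {0} \<and> B \<noteq> {0} \<and> direct_sum UNIV A B"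
    then obtain A B where s: "sl2_submodule sc e f h A" "sl2_submodule sc e f h B" "A \<noteq> {0}" "B \<noteq> {0}" "direct_sum UNIV A B"
      by blast
    have "rational sc e f h A" by (rule summand_rational[OF s(1) s(2) s(5)])
    moreover have "rational sc e f h B" by (rule summand_rational[OF s(2) s(1) direct_sum_sym[OF s(5)]])
    ultimately show "\<exists>A B. rational sc e f h A \<and> rational sc e f h B \<and> A \<noteq> {0} \<and> B \<noteq> {0} \<and> direct_sum UNIV A B"
      using s by blast
  qed
  then show ?thesis
    unfolding indecomposable_def R_indecomposable_def indecomp_wrt_def by simp
qed

lemma R_iff_RC:
  assumes g: "gen_casimir sc e f h UNIV"
  shows "R_indecomposable sc e f h UNIV \<longleftrightarrow> RC_indecomposable sc e f h UNIV"
proof -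
  have "rational sc e f h A \<longleftrightarrow> (rational sc e f h A \<and> gen_casimir sc e f h A)" for A
    using gen_sub[OF g rat_sub] by blast
  then show ?thesis
    unfolding RC_indecomposable_def R_indecomposable_def by simp
qed

end

theorem proposition6p10:
  fixes sc :: "complex \<Rightarrow> 'v::ab_group_add \<Rightarrow> 'v"
    and e f h :: "'v \<Rightarrow> 'v"
  assumes "sl2_module sc e f h"
    and "rational sc e f h UNIV"
  shows "(indecomposable sc e f h UNIV \<longleftrightarrow> R_indecomposable sc e f h UNIV)
    \<and> (indecomposable sc e f h UNIV \<longrightarrow> gen_casimir sc e f h UNIV)
    \<and> (R_indecomposable sc e f h UNIV \<longleftrightarrow>
         (gen_casimir sc e f h UNIV \<and> RC_indecomposable sc e f h UNIV))
    \<and> ((gen_casimir sc e f h UNIV \<and> RC_indecomposable sc e f h UNIV) \<longleftrightarrow>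
         (gen_casimir sc e f h UNIV \<and> indecomposable sc e f h UNIV))"
proof -
  interpret sl2rat sc e f h
    by (intro sl2rat.intro sl2ctx.intro sl2rat_axioms.intro assms)
  have 1: "indecomposable sc e f h UNIV \<longleftrightarrow> R_indecomposable sc e f h UNIV" by (rule ind_iff_R)
  have 2: "indecomposable sc e f h UNIV \<longrightarrow> gen_casimir sc e f h UNIV" using gen_cas by blast
  have 3: "gen_casimir sc e f h UNIV \<Longrightarrow> R_indecomposable sc e f h UNIV \<longleftrightarrow> RC_indecomposable sc e f h UNIV"
    by (rule R_iff_RC)
  show ?thesis using 1 2 3 by blast
qed

end
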